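(* Let $l,T\in\mathbb{N}$, let $\widehat{Q}:=(-\frac{1}{4},\ldots,-\frac{1}{4})+[-T,2T]^{l}\subseteq\mathbb{R}^l$, and let $\phi\colon\mathbb{Z}^{l}\to\mathbb{Z}^{l}$ be a permutation such that $\|\phi(x)-x\|\leq T$ for all $x\in\mathbb{Z}^{l}$. Then there exist permutations $\sigma_{1},\sigma_{2},\ldots,\sigma_{3^{l}}\colon \frac{1}{2}\mathbb{Z}^{l}\to\frac{1}{2}\mathbb{Z}^{l}$ such that (i) for each $k\in \{1,\dots,3^{l}\}$ there exists $p_{k}\in\{-1,0,1\}^{l}$ such that for every $z\in \mathbb{Z}^{l}$ the restriction of $\sigma_{k}$ to $\frac{1}{2}\mathbb{Z}^{l}\cap(\widehat{Q}+T(3z+p_{k}))$ is a permutation of $\frac{1}{2}\mathbb{Z}^{l}\cap (\widehat{Q}+T(3z+p_{k}))$; (ii) $\phi=(\sigma_{3^{l}}\circ \sigma_{3^{l}-1}\circ \cdots\circ \sigma_{1})|_{\mathbb{Z}^{l}}$.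
   Context: $\|\cdot\|$ is the Euclidean norm. *)

theory Defs
  imports "HOL-Analysis.Analysis"
begin

definition int_lattice :: "(real^'n) set" where
  "int_lattice = {x. \<forall>i. x $ i \<in> \<int>}"

definition half_lattice :: "(real^'n) set" where
  "half_lattice = {x. \<forall>i. 2 * x $ i \<in> \<int>}"

definition Qhat :: "nat \<Rightarrow> (real^'n) set" where
  "Qhat T = {x. \<forall>i. - 1/4 - real T \<le> x $ i \<and> x $ i \<le> - 1/4 + 2 * real T}"

definition shifted_Qhat :: "nat \<Rightarrow> int^'n \<Rightarrow> int^'n \<Rightarrow> (real^'n) set" where
  "shifted_Qhat T z p = (\<lambda>x. x + real T *\<^sub>R (\<chi> i. of_int (3 * z $ i + p $ i))) ` Qhat T"

primrec comp_upto :: "(nat \<Rightarrow> 'a \<Rightarrow> 'a) \<Rightarrow> nat \<Rightarrow> 'a \<Rightarrow> 'a" where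
  "comp_upto s 0 = id"
| "comp_upto s (Suc n) = s (Suc n) \<circ> comp_upto s n"

end

theory Submission imports Defs begin

definition swp :: "('a \<Rightarrow> 'a) \<Rightarrow> 'a set \<Rightarrow> 'a \<Rightarrow> 'a" where
  "swp f D y = (if y \<in> D then f y else if y \<in> f ` D then inv_into D f y else y)"

lemma swp_invol:
  assumes "inj_on f D" "f ` D \<inter> D = {}"
  shows "swp f D (swp f D y) = y"
  using assms unfolding swp_def by (auto simp: inv_into_f_f)

lemma swp_maps:
  assumes "inj_on f D" "\<forall>x\<in>D. x \<in> S \<longleftrightarrow> f x \<in> S" "y \<in> S"
  shows "swp f D y \<in> S"
  using assms unfolding swp_def by (auto simp: inv_into_f_f)

lemma invol_bij:
  assumes "\<forall>y. g (g y) = y" "\<forall>y\<in>S. g y \<in> S"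
  shows "bij_betw g S S"
proof -
  have inj: "inj_on g S"
  proof (rule inj_onI)
    fix x y assume "g x = g y"
    hence "g (g x) = g (g y)" by simp
    thus "x = y" using assms(1) by simp
  qed
  have "g ` S = S"
  proof
    show "g ` S \<subseteq> S" using assms(2) by blast
    show "S \<subseteq> g ` S"
    proof
      fix y assume "y \<in> S"
      have "y = g (g y)" using assms(1) by simp
      moreover have "g y \<in> S" using assms(2) \<open>y \<in> S\<close> by blast
      ultimately show "y \<in> g ` S" by (rule image_eqI)
    qed
  qed
  thus ?thesis using inj unfolding bij_betw_def by blast
qed

lemma swp_bij:
  assumes "inj_on f D" "f ` D \<inter> D = {}" "\<forall>x\<in>D. x \<in> S \<longleftrightarrow> f x \<in> S"
  shows "bij_betw (swp f D) S S"
  by (intro invol_bij allI ballI swp_invol[OF assms(1,2)] swp_maps[OF assms(1,3)])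

lemma two_cells:
  fixes a b r :: int
  assumes "T > 0" "\<bar>a - b\<bar> \<le> int T"
  shows "\<exists>c. c mod 3 \<noteq> r mod 3 \<and> int T*(c-1) \<le> a \<and> a < int T*(c+2) \<and> int T*(c-1) \<le> b \<and> b < int T*(c+2)"
proof -
  define m where "m = min a b"
  define u where "u = m div int T"
  have d: "m = int T * u + m mod int T" unfolding u_def by simp
  have "0 \<le> m mod int T" "m mod int T < int T" using assms(1) by auto
  hence lo: "int T * u \<le> m" and hi: "m < int T * u + int T" using d by linarith+
  have ab: "m \<le> a" "m \<le> b" "a \<le> m + int T" "b \<le> m + int T" using assms(2) unfolding m_def by auto
  have e1: "int T * (u-1) = int T * u - int T" by (simp add: algebra_simps)
  have e2: "int T * (u+2) = int T * u + 2 * int T" by (simp add: algebra_simps)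
  have e3: "int T * (u+1+2) = int T * u + 3 * int T" by (simp add: algebra_simps)
  have e4: "int T * (u+1-1) = int T * u" by simp
  have H1: "int T*(u-1) \<le> a \<and> a < int T*(u+2) \<and> int T*(u-1) \<le> b \<and> b < int T*(u+2)"
    unfolding e1 e2 using lo hi ab assms(1) by linarith
  have H2: "int T*(u+1-1) \<le> a \<and> a < int T*(u+1+2) \<and> int T*(u+1-1) \<le> b \<and> b < int T*(u+1+2)"
    unfolding e3 e4 using lo hi ab assms(1) by linarith
  show ?thesis
  proof (cases "u mod 3 = r mod 3")
    case True
    hence "(u+1) mod 3 \<noteq> r mod 3" by presburger
    thus ?thesis using H2 by blast
  next
    case False
    thus ?thesis using H1 by blast
  qed
qed

definition cell :: "nat \<Rightarrow> int \<Rightarrow> real \<Rightarrow> bool" where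
  "cell T c v \<longleftrightarrow> - 1/4 - real T \<le> v - real T * of_int c \<and> v - real T * of_int c \<le> - 1/4 + 2 * real T"

lemma thr1: "-1 < t \<Longrightarrow> t < 0 \<Longrightarrow> (t \<le> real_of_int k) = (0 \<le> k)"
proof (cases "0 \<le> k")
  case False
  hence "k \<le> -1" by simp
  hence "real_of_int k \<le> -1" by simp
  thus "-1 < t \<Longrightarrow> t < 0 \<Longrightarrow> (t \<le> real_of_int k) = (0 \<le> k)" using False by linarith
qed auto

lemma thr2: "-1 < t \<Longrightarrow> t < 0 \<Longrightarrow> (real_of_int k \<le> t) = (k < 0)"
  using thr1[of t k] by linarith

lemma cell_int: "cell T c (of_int a) \<longleftrightarrow> int T*(c-1) \<le> a \<and> a < int T*(c+2)"
proof -
  have 1: "(- 1/4 - real T \<le> of_int a - real T * of_int c) = (-1/4 \<le> real_of_int (a - int T * c + int T))"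
    by simp linarith
  have 2: "(of_int a - real T * of_int c \<le> - 1/4 + 2 * real T) = (real_of_int (a - int T * c - 2 * int T) \<le> -1/4)"
    by simp linarith
  have t1: "(-1/4 \<le> real_of_int (a - int T * c + int T)) = (0 \<le> a - int T * c + int T)"
    by (rule thr1) auto
  have t2: "(real_of_int (a - int T * c - 2 * int T) \<le> -1/4) = (a - int T * c - 2 * int T < 0)"
    by (rule thr2) auto
  show ?thesis unfolding cell_def 1 2 t1 t2
    by (simp add: algebra_simps)
qed

lemma cell_half: "cell T c (of_int a + 1/2) \<longleftrightarrow> int T*(c-1) \<le> a \<and> a < int T*(c+2)"
proof -
  have 1: "(- 1/4 - real T \<le> of_int a + 1/2 - real T * of_int c) = (-3/4 \<le> real_of_int (a - int T * c + int T))"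
    by simp linarith
  have 2: "(of_int a + 1/2 - real T * of_int c \<le> - 1/4 + 2 * real T) = (real_of_int (a - int T * c - 2 * int T) \<le> -3/4)"
    by simp linarith
  have t1: "(-3/4 \<le> real_of_int (a - int T * c + int T)) = (0 \<le> a - int T * c + int T)"
    by (rule thr1) auto
  have t2: "(real_of_int (a - int T * c - 2 * int T) \<le> -3/4) = (a - int T * c - 2 * int T < 0)"
    by (rule thr2) auto
  show ?thesis unfolding cell_def 1 2 t1 t2
    by (simp add: algebra_simps)
qed

lemma cell_unique:
  assumes "T > 0" "cell T c (of_int a)" "cell T c' (of_int a)" "c mod 3 = c' mod 3"
  shows "c = c'"
proof -
  have "int T*(c-1) < int T*(c'+2)" "int T*(c'-1) < int T*(c+2)"
    using assms(2,3) unfolding cell_int by linarith+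
  hence "c - 1 < c' + 2" "c' - 1 < c + 2" using assms(1) by (simp_all add: mult_less_cancel_left)
  thus ?thesis using assms(4) by presburger
qed

lemma mem_shifted:
  "y \<in> shifted_Qhat T z p \<longleftrightarrow> (\<forall>i. cell T (3 * z$i + p$i) (y$i))"
proof -
  define s :: "real^'a" where "s = real T *\<^sub>R (\<chi> i. of_int (3 * z $ i + p $ i))"
  have "y \<in> shifted_Qhat T z p \<longleftrightarrow> y - s \<in> Qhat T"
    unfolding shifted_Qhat_def s_def[symmetric] image_iff
    by (metis add_diff_cancel diff_add_cancel)
  also have "\<dots> \<longleftrightarrow> (\<forall>i. cell T (3 * z$i + p$i) (y$i))"
    unfolding Qhat_def cell_def s_def by simp
  finally show ?thesis .
qed

lemma comp_upto_id: "comp_upto (\<lambda>k. id) n = id"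
  by (induction n) auto

lemma half_not_int: "(1/2::real) \<notin> \<int>"
proof
  assume "(1/2::real) \<in> \<int>"
  then obtain k where "(1/2::real) = of_int k" by (auto elim: Ints_cases)
  hence "(1::real) = of_int (2*k)" by simp
  hence "1 = 2*k" by (metis of_int_eq_1_iff)
  thus False by presburger
qed

lemma cardP: "card {p :: int^'n. \<forall>i. p$i \<in> {-1,0,1}} = 3 ^ CARD('n)"
proof -
  have "bij_betw vec_nth {p :: int^'n. \<forall>i. p$i \<in> {-1,0,1}} (PiE UNIV (\<lambda>_. {-1,0,1::int}))"
    unfolding bij_betw_def inj_on_def PiE_UNIV_domain
  proof (intro conjI ballI impI)
    show "vec_nth ` {p :: int^'n. \<forall>i. p$i \<in> {-1,0,1}} = UNIV \<rightarrow> {-1,0,1}"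
    proof
      show "vec_nth ` {p :: int^'n. \<forall>i. p$i \<in> {-1,0,1}} \<subseteq> UNIV \<rightarrow> {-1,0,1}" by auto
      show "UNIV \<rightarrow> {-1,0,1} \<subseteq> vec_nth ` {p :: int^'n. \<forall>i. p$i \<in> {-1,0,1}}"
      proof
        fix g :: "'n \<Rightarrow> int" assume "g \<in> UNIV \<rightarrow> {-1,0,1}"
        hence "vec_lambda g \<in> {p :: int^'n. \<forall>i. p$i \<in> {-1,0,1}}" by auto
        moreover have "g = vec_nth (vec_lambda g)" by (rule ext) simp
        ultimately show "g \<in> vec_nth ` {p :: int^'n. \<forall>i. p$i \<in> {-1,0,1}}" by blast
      qed
    qed
  qed (simp add: vec_eq_iff)
  hence "card {p :: int^'n. \<forall>i. p$i \<in> {-1,0,1}} = card (PiE (UNIV::'n set) (\<lambda>_. {-1,0,1::int}))"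
    by (rule bij_betw_same_card)
  also have "\<dots> = 3 ^ CARD('n)" by (simp add: card_PiE numeral_3_eq_3)
  finally show ?thesis .
qed

lemma int_lat_half: "x \<in> int_lattice \<Longrightarrow> x \<in> half_lattice"
  unfolding int_lattice_def half_lattice_def by auto

lemma mem_int:
  assumes "x \<in> int_lattice"
  shows "x \<in> shifted_Qhat T z p \<longleftrightarrow>
    (\<forall>i. int T*(3 * z$i + p$i - 1) \<le> \<lfloor>x$i\<rfloor> \<and> \<lfloor>x$i\<rfloor> < int T*(3 * z$i + p$i + 2))"
proof -
  have e: "x$i = of_int \<lfloor>x$i\<rfloor>" for i using assms unfolding int_lattice_def by simp
  have "cell T c (x$i) = cell T c (of_int \<lfloor>x$i\<rfloor>)" for i c by (rule arg_cong[OF e])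
  thus ?thesis unfolding mem_shifted cell_int by simp
qed

lemma mem_int_h:
  assumes "x \<in> int_lattice"
  shows "x + (\<chi> i. 1/2) \<in> shifted_Qhat T z p \<longleftrightarrow> x \<in> shifted_Qhat T z p"
proof -
  have e: "x$i = of_int \<lfloor>x$i\<rfloor>" for i using assms unfolding int_lattice_def by simp
  have "cell T c (x$i + 1/2) = cell T c (of_int \<lfloor>x$i\<rfloor> + 1/2)" 
      "cell T c (x$i) = cell T c (of_int \<lfloor>x$i\<rfloor>)" for i c
    by (rule arg_cong[where f="\<lambda>v. cell T c (v + 1/2)", OF e], rule arg_cong[OF e])
  thus ?thesis unfolding mem_shifted cell_int cell_half by simp
qed

lemma h_half: "x \<in> int_lattice \<Longrightarrow> x + (\<chi> i. 1/2) \<in> half_lattice"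
  unfolding int_lattice_def half_lattice_def by (auto simp: distrib_left)

lemma h_not_int: "x \<in> int_lattice \<Longrightarrow> x + (\<chi> i. 1/2) \<notin> int_lattice"
proof
  assume a: "x \<in> int_lattice" "x + (\<chi> i. 1/2) \<in> int_lattice"
  fix i :: 'a
  have "x$i \<in> \<int>" "x$i + 1/2 \<in> \<int>" using a unfolding int_lattice_def by auto
  hence "(x$i + 1/2) - x$i \<in> \<int>" by (metis Ints_diff)
  thus False using half_not_int by simp
qed

lemma cube_unique:
  assumes "T > 0" "x \<in> int_lattice" "x \<in> shifted_Qhat T z p" "x \<in> shifted_Qhat T z' p"
  shows "z = z'"
proof -
  have "cell T (3 * z$i + p$i) (of_int \<lfloor>x$i\<rfloor>)" "cell T (3 * z'$i + p$i) (of_int \<lfloor>x$i\<rfloor>)" for i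
    using assms(3,4) assms(2) unfolding mem_int[OF assms(2)] cell_int by auto
  hence "3 * z$i + p$i = 3 * z'$i + p$i" for i
    by (rule cell_unique[OF assms(1)]) presburger
  thus ?thesis by (simp add: vec_eq_iff)
qed

lemma good_exists:
  fixes x y :: "real^'n" and r :: "int^'n"
  assumes "T > 0" "x \<in> int_lattice" "y \<in> int_lattice" "norm (y - x) \<le> real T"
  shows "\<exists>q z. (\<forall>i. q$i \<in> {-1,0,1}) \<and> q \<noteq> r \<and> x \<in> shifted_Qhat T z q \<and> y \<in> shifted_Qhat T z q"
proof -
  define i0 :: 'n where "i0 = undefined"
  have "\<exists>c. c mod 3 \<noteq> (if i = i0 then r$i0 else 0) mod 3 \<and>
     int T*(c-1) \<le> \<lfloor>x$i\<rfloor> \<and> \<lfloor>x$i\<rfloor> < int T*(c+2) \<and> int T*(c-1) \<le> \<lfloor>y$i\<rfloor> \<and> \<lfloor>y$i\<rfloor> < int T*(c+2)" (is "\<exists>c. ?Q i c") for i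
  proof (rule two_cells[OF assms(1)])
    obtain a b where ab: "a = \<lfloor>x$i\<rfloor>" "b = \<lfloor>y$i\<rfloor>" by blast
    have "x$i = of_int a" "y$i = of_int b" using assms(2,3) ab unfolding int_lattice_def by simp_all
    moreover have "\<bar>(y - x)$i\<bar> \<le> real T" using component_le_norm_cart[of "y - x" i] assms(4) by linarith
    ultimately have "\<bar>real_of_int (a - b)\<bar> \<le> real T" by (simp add: abs_minus_commute)
    hence "\<bar>a - b\<bar> \<le> int T" by linarith
    thus "\<bar>\<lfloor>x$i\<rfloor> - \<lfloor>y$i\<rfloor>\<bar> \<le> int T" using ab by simp
  qed
  hence "\<forall>i. \<exists>c. ?Q i c" by blast
  hence "\<exists>c. \<forall>i. ?Q i (c i)" by (rule choice)
  then obtain c where c: "\<And>i. ?Q i (c i)" by blast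
  define q :: "int^'n" where "q = (\<chi> i. (c i + 1) mod 3 - 1)"
  define z :: "int^'n" where "z = (\<chi> i. (c i - q$i) div 3)"
  have qz: "3 * z$i + q$i = c i" for i unfolding z_def q_def by simp presburger
  have qv: "q$i \<in> {-1,0,1}" for i
  proof -
    have "0 \<le> (c i + 1) mod 3" "(c i + 1) mod 3 < 3" by simp_all
    hence "(c i + 1) mod 3 \<in> {0,1,2}" by auto
    thus ?thesis unfolding q_def by auto
  qed
  have "q$i0 mod 3 = c i0 mod 3" unfolding q_def by simp presburger
  hence "q \<noteq> r" using c[of i0] by auto
  moreover have "x \<in> shifted_Qhat T z q"
    unfolding mem_int[OF assms(2)] qz
  proof
    fix i show "int T * (c i - 1) \<le> \<lfloor>x $ i\<rfloor> \<and> \<lfloor>x $ i\<rfloor> < int T * (c i + 2)" using c[of i] by blast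
  qed
  moreover have "y \<in> shifted_Qhat T z q"
    unfolding mem_int[OF assms(3)] qz
  proof
    fix i show "int T * (c i - 1) \<le> \<lfloor>y $ i\<rfloor> \<and> \<lfloor>y $ i\<rfloor> < int T * (c i + 2)" using c[of i] by blast
  qed
  ultimately show ?thesis using qv by (intro exI[of _ q] exI[of _ z]) simp
qed

theorem lemma5p2:
  fixes T :: nat and \<phi> :: "real^'n \<Rightarrow> real^'n"
  assumes perm: "bij_betw \<phi> int_lattice int_lattice"
    and close: "\<forall>x\<in>int_lattice. norm (\<phi> x - x) \<le> real T"
  shows "\<exists>\<sigma> :: nat \<Rightarrow> real^'n \<Rightarrow> real^'n.
           (\<forall>k\<in>{1..3 ^ CARD('n)}. bij_betw (\<sigma> k) half_lattice half_lattice)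
         \<and> (\<forall>k\<in>{1..3 ^ CARD('n)}. \<exists>p :: int^'n. (\<forall>i. p $ i \<in> {-1, 0, 1}) \<and>
              (\<forall>z :: int^'n. bij_betw (\<sigma> k) (half_lattice \<inter> shifted_Qhat T z p)
                                          (half_lattice \<inter> shifted_Qhat T z p)))
         \<and> (\<forall>x\<in>int_lattice. \<phi> x = comp_upto \<sigma> (3 ^ CARD('n)) x)"
proof (cases "T = 0")
  case True
  have "\<phi> x = x" if "x \<in> int_lattice" for x using close that True by auto
  moreover have "\<forall>i. (0::int^'n) $ i \<in> {-1, 0, 1}" by simp
  ultimately show ?thesis
    by (intro exI[of _ "\<lambda>k. id"] conjI ballI) (auto simp: comp_upto_id intro!: exI[of _ 0])
next
  case False
  hence T0: "T > 0" by simp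
  define L where "L = (3::nat) ^ CARD('n)"
  define P where "P = {p :: int^'n. \<forall>i. p$i \<in> {-1,0,1}}"
  have L1: "L > 1" unfolding L_def by (rule one_less_power) simp_all
  have "finite P"
  proof -
    have "P \<subseteq> UNIV" by simp
    have "card P = L" unfolding P_def L_def by (rule cardP)
    thus ?thesis using L1 card.infinite by fastforce
  qed
  moreover have "card {1..L} = card P" unfolding P_def L_def cardP by simp
  ultimately obtain e where e: "bij_betw e {1..L} P"
    using finite_same_card_bij[of "{1..L}" P] by auto
  define h :: "real^'n" where "h = (\<chi> i. 1/2)"
  have phi_int: "\<phi> x \<in> int_lattice" if "x \<in> int_lattice" for x
    using perm that bij_betwE by blast
  have phi_inj: "inj_on \<phi> int_lattice" using perm bij_betw_def by blast
  define good where "good k x \<longleftrightarrow> k \<in> {1..<L} \<and>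
      (\<exists>z. x \<in> shifted_Qhat T z (e k) \<and> \<phi> x \<in> shifted_Qhat T z (e k))" for k x
  have ex_good: "\<exists>k. good k x" if xx: "x \<in> int_lattice" for x
  proof -
    obtain q z where qz: "\<forall>i. q$i \<in> {-1,0,1}" "q \<noteq> e L" "x \<in> shifted_Qhat T z q" "\<phi> x \<in> shifted_Qhat T z q"
      using good_exists[OF T0 xx phi_int[OF xx] close[rule_format, OF xx]] by blast
    have "q \<in> P" using qz unfolding P_def by simp
    then obtain k where k: "k \<in> {1..L}" "e k = q" using e by (metis bij_betw_iff_bijections)
    hence "k \<in> {1..<L}" using qz(2) by (cases "k = L") auto
    thus ?thesis using qz k unfolding good_def by blast
  qed
  define kx where "kx x = (LEAST k. good k x)" for x
  have kx_good: "good (kx x) x" if "x \<in> int_lattice" for x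
    unfolding kx_def using ex_good[OF that] by (rule LeastI_ex)
  define A where "A k = {x \<in> int_lattice. kx x = k}" for k
  define f where "f x = \<phi> x + h" for x
  define \<sigma> where "\<sigma> k = (if k = L then swp (\<lambda>y. y + h) int_lattice else swp f (A k))" for k
  have injf: "inj_on f (A k)" for k
    using phi_inj unfolding f_def A_def inj_on_def by auto
  have disjf: "f ` (A k) \<inter> A k = {}" for k
    using h_not_int phi_int unfolding f_def A_def h_def by auto
  have injh: "inj_on (\<lambda>y. y + h) int_lattice" by (simp add: inj_on_def)
  have disjh: "(\<lambda>y. y + h) ` int_lattice \<inter> int_lattice = {}"
    using h_not_int unfolding h_def by auto
  have step: "bij_betw (\<sigma> k) half_lattice half_lattice \<and>
      (\<forall>z. bij_betw (\<sigma> k) (half_lattice \<inter> shifted_Qhat T z (e k)) (half_lattice \<inter> shifted_Qhat T z (e k)))"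
    if k: "k \<in> {1..L}" for k
  proof (cases "k = L")
    case True
    have 1: "bij_betw (\<sigma> k) half_lattice half_lattice"
      unfolding \<sigma>_def using True
      by (simp, intro swp_bij[OF injh disjh]) (use int_lat_half h_half h_def in auto)
    have 2: "bij_betw (\<sigma> k) (half_lattice \<inter> shifted_Qhat T z (e k)) (half_lattice \<inter> shifted_Qhat T z (e k))" for z
      unfolding \<sigma>_def using True
      by (simp, intro swp_bij[OF injh disjh]) (auto simp: h_def int_lat_half h_half mem_int_h)
    show ?thesis using 1 2 by blast
  next
    case False
    have 1: "bij_betw (\<sigma> k) half_lattice half_lattice"
      unfolding \<sigma>_def using False
      by (simp, intro swp_bij[OF injf disjf]) (use int_lat_half h_half h_half[OF phi_int] h_def f_def A_def phi_int in auto)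
    have 2: "bij_betw (\<sigma> k) (half_lattice \<inter> shifted_Qhat T z (e k)) (half_lattice \<inter> shifted_Qhat T z (e k))" for z
      unfolding \<sigma>_def using False
    proof (simp, intro swp_bij[OF injf disjf] ballI)
      fix x assume x: "x \<in> A k"
      hence xi: "x \<in> int_lattice" and kk: "kx x = k" unfolding A_def by auto
      obtain z0 where z0: "x \<in> shifted_Qhat T z0 (e k)" "\<phi> x \<in> shifted_Qhat T z0 (e k)"
        using kx_good[OF xi] kk unfolding good_def by auto
      have "x \<in> shifted_Qhat T z (e k) \<longleftrightarrow> z = z0"
        using cube_unique[OF T0 xi _ z0(1)] z0(1) by blast
      moreover have "\<phi> x \<in> shifted_Qhat T z (e k) \<longleftrightarrow> z = z0"
        using cube_unique[OF T0 phi_int[OF xi] _ z0(2)] z0(2) by blast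
      moreover have "f x \<in> shifted_Qhat T z (e k) \<longleftrightarrow> \<phi> x \<in> shifted_Qhat T z (e k)"
        unfolding f_def h_def by (rule mem_int_h[OF phi_int[OF xi]])
      moreover have "x \<in> half_lattice" "f x \<in> half_lattice"
        using int_lat_half xi h_half phi_int unfolding f_def h_def by auto
      ultimately show "(x \<in> half_lattice \<inter> shifted_Qhat T z (e k)) = (f x \<in> half_lattice \<inter> shifted_Qhat T z (e k))"
        by blast
    qed
    show ?thesis using 1 2 by blast
  qed
  have inv: "comp_upto \<sigma> k x = (if kx x \<le> k then \<phi> x + h else x)"
    if "x \<in> int_lattice" "k < L" for k x
    using that(2)
  proof (induction k)
    case 0
    have "kx x \<ge> 1" using kx_good[OF that(1)] unfolding good_def by auto
    thus ?case by simp
  next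
    case (Suc k)
    have IH: "comp_upto \<sigma> k x = (if kx x \<le> k then \<phi> x + h else x)" using Suc by simp
    have sk: "\<sigma> (Suc k) = swp f (A (Suc k))" unfolding \<sigma>_def using Suc.prems by simp
    show ?case
    proof (cases "kx x \<le> k")
      case True
      have "\<phi> x + h \<notin> A (Suc k)" using h_not_int phi_int[OF that(1)] unfolding A_def h_def by auto
      moreover have "\<phi> x + h \<notin> f ` A (Suc k)"
      proof
        assume "\<phi> x + h \<in> f ` A (Suc k)"
        then obtain x' where "x' \<in> A (Suc k)" "\<phi> x + h = \<phi> x' + h" unfolding f_def by auto
        hence "x' = x" "kx x' = Suc k" using phi_inj that(1) unfolding A_def inj_on_def by auto
        thus False using True by simp
      qed
      ultimately show ?thesis using IH True sk unfolding swp_def by simp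
    next
      case False
      show ?thesis
      proof (cases "kx x = Suc k")
        case True
        hence "x \<in> A (Suc k)" using that(1) unfolding A_def by simp
        thus ?thesis using IH False True sk unfolding swp_def f_def by simp
      next
        case F2: False
        hence "x \<notin> A (Suc k)" unfolding A_def by simp
        moreover have "x \<notin> f ` A (Suc k)"
          using h_not_int phi_int that(1) unfolding f_def A_def h_def by auto
        ultimately show ?thesis using IH False F2 sk unfolding swp_def by simp
      qed
    qed
  qed
  have final: "\<phi> x = comp_upto \<sigma> L x" if x: "x \<in> int_lattice" for x
  proof -
    have LL: "L = Suc (L - 1)" using L1 by simp
    have "kx x \<le> L - 1" using kx_good[OF x] unfolding good_def by auto
    hence c1: "comp_upto \<sigma> (L - 1) x = \<phi> x + h" using inv[OF x, of "L - 1"] L1 by simp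
    have "comp_upto \<sigma> L x = comp_upto \<sigma> (Suc (L - 1)) x"
      by (rule arg_cong[where f="\<lambda>n. comp_upto \<sigma> n x"]) (rule LL)
    also have "\<dots> = \<sigma> (Suc (L - 1)) (comp_upto \<sigma> (L - 1) x)"
      by (simp only: comp_upto.simps comp_apply)
    also have "\<dots> = \<sigma> L (comp_upto \<sigma> (L - 1) x)"
      by (simp only: LL[symmetric])
    also have "\<dots> = swp (\<lambda>y. y + h) int_lattice (\<phi> x + h)" using c1 unfolding \<sigma>_def by simp
    also have "\<dots> = \<phi> x"
    proof -
      have "\<phi> x + h \<notin> int_lattice" using h_not_int phi_int[OF x] unfolding h_def by auto
      moreover have "\<phi> x + h \<in> (\<lambda>y. y + h) ` int_lattice" using phi_int[OF x] by auto
      ultimately show ?thesis unfolding swp_def using inv_into_f_f[OF injh phi_int[OF x]] by (simp only: if_False if_True)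
    qed
    finally show ?thesis by (rule sym)
  qed
  show ?thesis
  proof (intro exI[of _ \<sigma>] conjI ballI)
    fix k :: nat assume "k \<in> {1..3 ^ CARD('n)}"
    hence k: "k \<in> {1..L}" unfolding L_def by simp
    show "bij_betw (\<sigma> k) half_lattice half_lattice" using step[OF k] by (rule conjunct1)
    have "e k \<in> P" using e k bij_betwE by blast
    hence ek: "\<forall>i. e k $ i \<in> {-1, 0, 1}" unfolding P_def by simp
    have sk: "\<forall>z :: int^'n. bij_betw (\<sigma> k) (half_lattice \<inter> shifted_Qhat T z (e k))
                                          (half_lattice \<inter> shifted_Qhat T z (e k))"
      using step[OF k] by (rule conjunct2)
    show "\<exists>p :: int^'n. (\<forall>i. p $ i \<in> {-1, 0, 1}) \<and>
              (\<forall>z :: int^'n. bij_betw (\<sigma> k) (half_lattice \<inter> shifted_Qhat T z p)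
                                          (half_lattice \<inter> shifted_Qhat T z p))"
      using ek sk by (rule exI[of _ "e k", OF conjI])
  next
    fix x :: "real^'n" assume "x \<in> int_lattice"
    from final[OF this] show "\<phi> x = comp_upto \<sigma> (3 ^ CARD('n)) x" unfolding L_def .
  qed
qed

end
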